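(* Let $L$ be a finite semidistributive extremal lattice with $|L|>1$. Then the order dimension of $L$ equals the chromatic number of the complement $\overline{G(L)}$ of its Galois graph.
   Context: A lattice is semidistributive if $x\vee y=x\vee z$ implies $x\vee(y\wedge z)=x\vee y$ and $x\wedge y=x\wedge z$ implies $x\wedge(y\vee z)=x\wedge y$. $L$ is extremal if its length $n$ (maximum number of elements of a chain minus one) equals both the number of join-irreducible elements and the number of meet-irreducible elements. For extremal $L$, choosing a chain $\hat0=x_0\lessdot\dots\lessdot x_n=\hat1$ of length $n$ gives numberings $j_1,\dots,j_n$ of the join-irreducibles and $m_1,\dots,m_n$ of the meet-irreducibles with $x_i=j_1\vee\dots\vee j_i=m_{i+1}\wedge\dots\wedge m_n$. The Galois graph $G(L)$ is the directed graph on the join-irreducibles with an edge $j_i\to j_k$ whenever $i\ne k$ and $j_i\not\le m_k$. Its complement $\overline{G(L)}$ is the simple undirected graph on the same vertices with an edge between two vertices iff there is no directed edge between them in either direction. The order dimension of a poset $P$ is the least $d$ such that $P$ is isomorphic to a subposet of $\mathbb R^d$ with the componentwise order. *)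

theory Defs
  imports Complex_Main
begin

definition semidistributive :: "'a::lattice itself \<Rightarrow> bool" where
  "semidistributive _ \<longleftrightarrow>
     (\<forall>x y z::'a. sup x y = sup x z \<longrightarrow> sup x (inf y z) = sup x y) \<and>
     (\<forall>x y z::'a. inf x y = inf x z \<longrightarrow> inf x (sup y z) = inf x y)"

definition join_irr :: "'a::lattice \<Rightarrow> bool" where
  "join_irr x \<longleftrightarrow> (\<exists>y. y < x) \<and> (\<forall>a b. x = sup a b \<longrightarrow> x = a \<or> x = b)"

definition meet_irr :: "'a::lattice \<Rightarrow> bool" where
  "meet_irr x \<longleftrightarrow> (\<exists>y. x < y) \<and> (\<forall>a b. x = inf a b \<longrightarrow> x = a \<or> x = b)"

definition is_chain :: "'a::order set \<Rightarrow> bool" where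
  "is_chain C \<longleftrightarrow> (\<forall>x\<in>C. \<forall>y\<in>C. x \<le> y \<or> y \<le> x)"

definition lattice_length :: "'a::{finite,order} itself \<Rightarrow> nat" where
  "lattice_length _ = Max {card C | C::'a set. is_chain C} - 1"

definition extremal :: "'a::{finite,lattice} itself \<Rightarrow> bool" where
  "extremal T \<longleftrightarrow> lattice_length T = card {x::'a. join_irr x} \<and>
                   lattice_length T = card {x::'a. meet_irr x}"

(* Order dimension: least d such that P embeds into R^d with the componentwise order
   (vectors of R^d represented as functions nat => real, coordinates i < d). *)
definition order_dim :: "'a::order itself \<Rightarrow> nat" where
  "order_dim _ = (LEAST d. \<exists>f :: 'a \<Rightarrow> nat \<Rightarrow> real.
       \<forall>x y. x \<le> y \<longleftrightarrow> (\<forall>i<d. f x i \<le> f y i))"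

definition chromatic_number :: "'v set \<Rightarrow> ('v \<Rightarrow> 'v \<Rightarrow> bool) \<Rightarrow> nat" where
  "chromatic_number V E = (LEAST c. \<exists>col :: 'v \<Rightarrow> nat.
       (\<forall>v\<in>V. col v < c) \<and> (\<forall>u\<in>V. \<forall>v\<in>V. E u v \<longrightarrow> col u \<noteq> col v))"

(* The data coming from a chain x_0 < ... < x_n of length n, with numberings
   j_1..j_n of the join-irreducibles and m_1..m_n of the meet-irreducibles such that
   x_i = j_1 v ... v j_i = m_{i+1} ^ ... ^ m_n (iterated joins / meets). *)
definition galois_numbering ::
  "nat \<Rightarrow> (nat \<Rightarrow> 'a::{finite,bounded_lattice}) \<Rightarrow> (nat \<Rightarrow> 'a) \<Rightarrow> (nat \<Rightarrow> 'a) \<Rightarrow> bool" where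
  "galois_numbering n x j m \<longleftrightarrow>
     strict_mono_on {0..n} x \<and> x 0 = bot \<and> x n = top \<and>
     bij_betw j {1..n} {a. join_irr a} \<and> bij_betw m {1..n} {a. meet_irr a} \<and>
     (\<forall>i\<in>{1..n}. x i = sup (x (i - 1)) (j i)) \<and>
     (\<forall>i<n. x i = inf (m (i + 1)) (x (i + 1)))"

definition galois_edge ::
  "nat \<Rightarrow> (nat \<Rightarrow> 'a::{finite,bounded_lattice}) \<Rightarrow> (nat \<Rightarrow> 'a) \<Rightarrow> 'a \<Rightarrow> 'a \<Rightarrow> bool" where
  "galois_edge n j m u v \<longleftrightarrow>
     (\<exists>i\<in>{1..n}. \<exists>k\<in>{1..n}. j i = u \<and> j k = v \<and> i \<noteq> k \<and> \<not> (u \<le> m k))"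

definition galois_complement_edge ::
  "nat \<Rightarrow> (nat \<Rightarrow> 'a::{finite,bounded_lattice}) \<Rightarrow> (nat \<Rightarrow> 'a) \<Rightarrow> 'a \<Rightarrow> 'a \<Rightarrow> bool" where
  "galois_complement_edge n j m u v \<longleftrightarrow>
     u \<noteq> v \<and> \<not> galois_edge n j m u v \<and> \<not> galois_edge n j m v u"

end

theory Submission
  imports Defs
begin

lemma gn_D:
  assumes "galois_numbering n x j m"
  shows "strict_mono_on {0..n} x"
    and "\<And>i. i \<in> {1..n} \<Longrightarrow> x i = sup (x (i - 1)) (j i)"
    and "\<And>i. i < n \<Longrightarrow> x i = inf (m (i + 1)) (x (i + 1))"
    and "bij_betw j {1..n} {a. join_irr a}"
    and "bij_betw m {1..n} {a. meet_irr a}"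
  using assms unfolding galois_numbering_def by blast+

lemma gn_mono:
  assumes "galois_numbering n x j m" "i \<le> k" "k \<le> n"
  shows "x i \<le> x k"
proof (cases "i = k")
  case False
  then have "i < k" using assms by simp
  then have "x i < x k" using strict_mono_onD[OF gn_D(1)[OF assms(1)]] assms by simp
  then show ?thesis by (rule less_imp_le)
qed simp

lemma gn_jx:
  assumes "galois_numbering n x j m" "i \<in> {1..n}"
  shows "j i \<le> x i"
proof -
  have "x i = sup (x (i - 1)) (j i)" by (rule gn_D(2)[OF assms])
  then show ?thesis by (metis sup_ge2)
qed

lemma gn_xm:
  assumes "galois_numbering n x j m" "k \<in> {1..n}"
  shows "x (k - 1) \<le> m k"
proof -
  have "k - 1 < n" using assms by auto
  then have "x (k - 1) = inf (m (k - 1 + 1)) (x (k - 1 + 1))"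
    by (rule gn_D(3)[OF assms(1)])
  moreover have "k - 1 + 1 = k" using assms by auto
  ultimately show ?thesis by (metis inf_le1)
qed

lemma gn_lt:
  assumes "galois_numbering n x j m" "i \<in> {1..n}" "k \<in> {1..n}" "i < k"
  shows "j i \<le> m k"
proof -
  have "j i \<le> x i" using gn_jx assms by blast
  also have "x i \<le> x (k - 1)" using gn_mono[OF assms(1)] assms by auto
  also have "x (k - 1) \<le> m k" using gn_xm assms by blast
  finally show ?thesis .
qed

lemma gn_not:
  assumes "galois_numbering n x j m" "i \<in> {1..n}"
  shows "\<not> j i \<le> m i"
proof
  assume h: "j i \<le> m i"
  have lt: "x (i - 1) < x i" using strict_mono_onD[OF gn_D(1)[OF assms(1)]] assms by simp
  have "i - 1 < n" using assms by auto
  then have e: "x (i - 1) = inf (m (i - 1 + 1)) (x (i - 1 + 1))"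
    by (rule gn_D(3)[OF assms(1)])
  have ii: "i - 1 + 1 = i" using assms by auto
  have xi: "x i = sup (x (i - 1)) (j i)" by (rule gn_D(2)[OF assms])
  have "x (i - 1) \<le> m i" using gn_xm assms by blast
  then have "x i \<le> m i" using xi h by simp
  then have "x (i - 1) = x i" using e ii by (simp add: inf_absorb2)
  then show False using lt by simp
qed

section \<open>Critical pairs\<close>

definition crit :: "'a::order \<Rightarrow> 'a \<Rightarrow> bool" where
  "crit a b \<longleftrightarrow> \<not> a \<le> b \<and> (\<forall>y. y < a \<longrightarrow> y \<le> b) \<and> (\<forall>y. b < y \<longrightarrow> a \<le> y)"

lemma crit_exists:
  fixes z w :: "'a::{finite,bounded_lattice}"
  assumes "\<not> z \<le> w"
  shows "\<exists>a b. join_irr a \<and> meet_irr b \<and> a \<le> z \<and> w \<le> b \<and> crit a b"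
proof -
  obtain a where a: "a \<in> {a. a \<le> z \<and> \<not> a \<le> w}"
    and amin: "\<forall>c \<in> {a. a \<le> z \<and> \<not> a \<le> w}. c \<le> a \<longrightarrow> a = c"
    using finite_has_minimal[of "{a. a \<le> z \<and> \<not> a \<le> w}"] assms by auto
  have below: "\<forall>y. y < a \<longrightarrow> y \<le> w"
  proof (intro allI impI)
    fix y assume y: "y < a"
    show "y \<le> w"
    proof (rule ccontr)
      assume "\<not> y \<le> w"
      moreover have "y \<le> z" using less_imp_le[OF y] a by (blast intro: order.trans)
      ultimately have "y \<in> {a. a \<le> z \<and> \<not> a \<le> w}" by simp
      then have "a = y" using amin y by (simp add: less_imp_le)
      then show False using y by simp
    qed
  qed
  obtain b where b: "b \<in> {b. w \<le> b \<and> \<not> a \<le> b}"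
    and bmax: "\<forall>c \<in> {b. w \<le> b \<and> \<not> a \<le> b}. b \<le> c \<longrightarrow> b = c"
    using finite_has_maximal[of "{b. w \<le> b \<and> \<not> a \<le> b}"] a by auto
  have above: "\<forall>y. b < y \<longrightarrow> a \<le> y"
  proof (intro allI impI)
    fix y assume y: "b < y"
    show "a \<le> y"
    proof (rule ccontr)
      assume "\<not> a \<le> y"
      moreover have "w \<le> y" using less_imp_le[OF y] b by (blast intro: order.trans)
      ultimately have "y \<in> {b. w \<le> b \<and> \<not> a \<le> b}" by simp
      then have "b = y" using bmax y by (simp add: less_imp_le)
      then show False using y by simp
    qed
  qed
  have ja: "join_irr a"
    unfolding join_irr_def
  proof
    have "a \<noteq> bot" using a by auto
    then have "bot < a" by (simp add: bot.not_eq_extremum)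
    then show "\<exists>y. y < a" by blast
    show "\<forall>p q. a = sup p q \<longrightarrow> a = p \<or> a = q"
    proof (intro allI impI)
      fix p q assume h: "a = sup p q"
      show "a = p \<or> a = q"
      proof (rule ccontr)
        assume "\<not> (a = p \<or> a = q)"
        then have "p < a" "q < a" using h by (auto simp: order.strict_iff_order)
        then have "p \<le> w" "q \<le> w" using below by auto
        then show False using a h by simp
      qed
    qed
  qed
  have mb: "meet_irr b"
    unfolding meet_irr_def
  proof
    have "b \<noteq> top" using b by auto
    then have "b < top" by (simp add: top.not_eq_extremum)
    then show "\<exists>y. b < y" by blast
    show "\<forall>p q. b = inf p q \<longrightarrow> b = p \<or> b = q"
    proof (intro allI impI)
      fix p q assume h: "b = inf p q"
      show "b = p \<or> b = q"
      proof (rule ccontr)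
        assume "\<not> (b = p \<or> b = q)"
        then have "b < p" "b < q" using h by (auto simp: order.strict_iff_order)
        then have "a \<le> p" "a \<le> q" using above by auto
        then show False using b h by simp
      qed
    qed
  qed
  have "crit a b" unfolding crit_def using a b below above by auto
  then show ?thesis using ja mb a b by blast
qed

lemma crit_lower:
  fixes a :: "'a::{finite,bounded_lattice}"
  assumes "join_irr a"
  shows "\<exists>w. \<not> a \<le> w \<and> (\<forall>y. y < a \<longrightarrow> y \<le> w)"
proof -
  have "\<exists>y. y < a" using assms unfolding join_irr_def by (rule conjunct1)
  then have ne: "{y. y < a} \<noteq> {}" by blast
  obtain w where w: "w \<in> {y. y < a}" and wmax: "\<forall>c \<in> {y. y < a}. w \<le> c \<longrightarrow> w = c"
    using finite_has_maximal[OF finite ne] by blast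
  have "\<forall>y. y < a \<longrightarrow> y \<le> w"
  proof (intro allI impI)
    fix y assume y: "y < a"
    have "sup y w \<le> a" using y w by (simp add: less_imp_le)
    moreover have "sup y w \<noteq> a"
    proof
      assume "sup y w = a"
      moreover have "\<forall>p q. a = sup p q \<longrightarrow> a = p \<or> a = q"
        using assms unfolding join_irr_def by (rule conjunct2)
      ultimately have "a = y \<or> a = w" by blast
      then show False using y w by auto
    qed
    ultimately have "sup y w < a" using order.strict_iff_order by blast
    then have "w = sup y w" using wmax by simp
    then show "y \<le> w" by (metis sup_ge1)
  qed
  then show ?thesis using w by (auto simp: less_le_not_le)
qed

lemma crit_unique_b:
  fixes a :: "'a::{finite,bounded_lattice}"
  assumes sd: "semidistributive TYPE('a)" and c1: "crit a b" and c2: "crit a b'"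
  shows "b = b'"
proof (rule ccontr)
  assume ne: "b \<noteq> b'"
  have l1: "inf a b < a" using c1 unfolding crit_def by (metis inf.absorb_iff1 inf_le1 order.strict_iff_order inf_le2)
  have l2: "inf a b' < a" using c2 unfolding crit_def by (metis inf.absorb_iff1 inf_le1 order.strict_iff_order inf_le2)
  have "inf a b \<le> b'" using l1 c2 unfolding crit_def by blast
  then have e1: "inf a b \<le> inf a b'" by simp
  have "inf a b' \<le> b" using l2 c1 unfolding crit_def by blast
  then have "inf a b' \<le> inf a b" by simp
  with e1 have "inf a b = inf a b'" by (rule antisym)
  then have e: "inf a (sup b b') = inf a b" using sd unfolding semidistributive_def by blast
  show False
  proof (cases "sup b b' = b")
    case True
    then have "b' < b" using ne by (metis sup.absorb_iff1 order.strict_iff_order)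
    then have "a \<le> b" using c2 unfolding crit_def by blast
    then show False using c1 unfolding crit_def by blast
  next
    case False
    then have "b < sup b b'" by (simp add: order.strict_iff_order)
    then have "a \<le> sup b b'" using c1 unfolding crit_def by blast
    then have "inf a b = a" using e by (simp add: inf_absorb1)
    then show False using c1 unfolding crit_def by (metis inf.absorb_iff1)
  qed
qed

lemma crit_unique_a:
  fixes a :: "'a::{finite,bounded_lattice}"
  assumes sd: "semidistributive TYPE('a)" and c1: "crit a b" and c2: "crit a' b"
  shows "a = a'"
proof (rule ccontr)
  assume ne: "a \<noteq> a'"
  have l1: "b < sup b a" using c1 unfolding crit_def by (metis sup.absorb_iff1 sup_ge1 order.strict_iff_order sup_ge2)
  have l2: "b < sup b a'" using c2 unfolding crit_def by (metis sup.absorb_iff1 sup_ge1 order.strict_iff_order sup_ge2)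
  have "a \<le> sup b a'" using l2 c1 unfolding crit_def by blast
  then have e1: "sup b a \<le> sup b a'" by simp
  have "a' \<le> sup b a" using l1 c2 unfolding crit_def by blast
  then have "sup b a' \<le> sup b a" by simp
  with e1 have "sup b a = sup b a'" by (rule antisym)
  then have e: "sup b (inf a a') = sup b a" using sd unfolding semidistributive_def by blast
  show False
  proof (cases "inf a a' = a")
    case True
    then have "a < a'" using ne by (metis inf.absorb_iff1 order.strict_iff_order)
    then have "a \<le> b" using c2 unfolding crit_def by blast
    then show False using c1 unfolding crit_def by blast
  next
    case False
    then have "inf a a' < a" by (simp add: order.strict_iff_order)
    then have "inf a a' \<le> b" using c1 unfolding crit_def by blast
    then have "sup b a = b" using e by (simp add: sup_absorb1)
    then show False using c1 unfolding crit_def by (metis sup.absorb_iff1)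
  qed
qed

lemma gn_crit_diag:
  fixes j m :: "nat \<Rightarrow> 'a::{finite,bounded_lattice}"
  assumes sd: "semidistributive TYPE('a)" and g: "galois_numbering n x j m"
  shows "\<forall>i k. i \<in> {1..n} \<longrightarrow> k \<in> {1..n} \<longrightarrow> crit (j i) (m k) \<longrightarrow> k = i"
proof -
  have bj: "bij_betw j {1..n} {a. join_irr a}" and bm: "bij_betw m {1..n} {a. meet_irr a}"
    using gn_D[OF g] by blast+
  have tot: "\<exists>k\<in>{1..n}. crit (j i) (m k)" if i: "i \<in> {1..n}" for i
  proof -
    have ji: "join_irr (j i)" using bj i by (auto simp: bij_betw_def)
    obtain w where w: "\<not> j i \<le> w" "\<forall>y. y < j i \<longrightarrow> y \<le> w" using crit_lower[OF ji] by blast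
    obtain a b where ab: "join_irr a" "meet_irr b" "a \<le> j i" "w \<le> b" "crit a b"
      using crit_exists[OF w(1)] by blast
    have "a = j i"
    proof (rule ccontr)
      assume "a \<noteq> j i"
      then have "a < j i" using ab by simp
      then have "a \<le> w" using w by blast
      then have "a \<le> b" using ab by simp
      then show False using ab unfolding crit_def by blast
    qed
    moreover have "b \<in> m ` {1..n}" using bm ab(2) unfolding bij_betw_def by simp
    then obtain k where "k \<in> {1..n}" "m k = b" by blast
    ultimately show ?thesis using ab by blast
  qed
  have le: "k \<le> i" if "i \<in> {1..n}" "k \<in> {1..n}" "crit (j i) (m k)" for i k
  proof (rule ccontr)
    assume "\<not> k \<le> i"
    then have "j i \<le> m k" using gn_lt[OF g] that by simp
    then show False using that unfolding crit_def by blast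
  qed
  have main: "\<forall>k. i \<in> {1..n} \<longrightarrow> k \<in> {1..n} \<longrightarrow> crit (j i) (m k) \<longrightarrow> k = i" for i
  proof (induction i rule: less_induct)
    case (less i)
    show ?case
    proof (intro allI impI)
      fix k assume i: "i \<in> {1..n}" and k: "k \<in> {1..n}" and c: "crit (j i) (m k)"
      show "k = i"
      proof (rule ccontr)
        assume "k \<noteq> i"
        then have "k < i" using le[OF i k c] by simp
        obtain k' where k': "k' \<in> {1..n}" "crit (j k) (m k')" using tot k by blast
        then have "k' = k" using less.IH[OF \<open>k < i\<close>, rule_format, OF k k'(1) k'(2)] by simp
        then have "crit (j k) (m k)" using k' by simp
        then have "j k = j i" using crit_unique_a[OF sd _ c] by blast
        then have "k = i" using bij_betw_imp_inj_on[OF bj] k i by (meson inj_onD)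
        then show False using \<open>k \<noteq> i\<close> by simp
      qed
    qed
  qed
  then show ?thesis by blast
qed

lemma gn_separate:
  fixes j m :: "nat \<Rightarrow> 'a::{finite,bounded_lattice}"
  assumes sd: "semidistributive TYPE('a)" and g: "galois_numbering n x j m"
    and nle: "\<not> z \<le> w"
  shows "\<exists>i\<in>{1..n}. j i \<le> z \<and> w \<le> m i"
proof -
  have bj: "bij_betw j {1..n} {a. join_irr a}" and bm: "bij_betw m {1..n} {a. meet_irr a}"
    using gn_D[OF g] by blast+
  obtain a b where ab: "join_irr a" "meet_irr b" "a \<le> z" "w \<le> b" "crit a b"
    using crit_exists[OF nle] by blast
  have "a \<in> j ` {1..n}" using bj ab(1) unfolding bij_betw_def by simp
  then obtain i where i: "i \<in> {1..n}" "j i = a" by blast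
  have "b \<in> m ` {1..n}" using bm ab(2) unfolding bij_betw_def by simp
  then obtain k where k: "k \<in> {1..n}" "m k = b" by blast
  have "k = i" using gn_crit_diag[OF sd g] i k ab by blast
  then show ?thesis using i k ab by blast
qed

lemma compl_edge_jj:
  fixes j m :: "nat \<Rightarrow> 'a::{finite,bounded_lattice}"
  assumes g: "galois_numbering n x j m" and i: "i \<in> {1..n}" and k: "k \<in> {1..n}"
    and ne: "i \<noteq> k" and h1: "j i \<le> m k" and h2: "j k \<le> m i"
  shows "galois_complement_edge n j m (j i) (j k)"
proof -
  have inj: "inj_on j {1..n}" using gn_D(4)[OF g] by (rule bij_betw_imp_inj_on)
  have "j i \<noteq> j k" using inj i k ne by (meson inj_onD)
  moreover have "\<not> galois_edge n j m (j i) (j k)"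
  proof
    assume "galois_edge n j m (j i) (j k)"
    then obtain k' where k': "k' \<in> {1..n}" "j k' = j k" "\<not> j i \<le> m k'"
      unfolding galois_edge_def by blast
    then have "k' = k" using inj k by (meson inj_onD)
    then show False using h1 k' by simp
  qed
  moreover have "\<not> galois_edge n j m (j k) (j i)"
  proof
    assume "galois_edge n j m (j k) (j i)"
    then obtain k' where k': "k' \<in> {1..n}" "j k' = j i" "\<not> j k \<le> m k'"
      unfolding galois_edge_def by blast
    then have "k' = i" using inj i by (meson inj_onD)
    then show False using h2 k' by simp
  qed
  ultimately show ?thesis unfolding galois_complement_edge_def by simp
qed

lemma dim_to_col:
  fixes j m :: "nat \<Rightarrow> 'a::{finite,bounded_lattice}"
  assumes g: "galois_numbering n x j m"
    and f: "\<forall>u v::'a. u \<le> v \<longleftrightarrow> (\<forall>i<d. f u i \<le> (f v i :: real))"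
  shows "\<exists>col :: 'a \<Rightarrow> nat. (\<forall>v\<in>{a. join_irr a}. col v < d) \<and>
     (\<forall>u\<in>{a. join_irr a}. \<forall>v\<in>{a. join_irr a}. galois_complement_edge n j m u v \<longrightarrow> col u \<noteq> col v)"
proof -
  have bj: "bij_betw j {1..n} {a. join_irr a}"
    using gn_D[OF g] by blast+
  define ix where "ix a = inv_into {1..n} j a" for a
  have ix: "ix a \<in> {1..n}" "j (ix a) = a" if "join_irr a" for a
  proof -
    have "a \<in> j ` {1..n}" using bj that unfolding bij_betw_def by simp
    then show "ix a \<in> {1..n}" "j (ix a) = a" unfolding ix_def
      by (rule inv_into_into, rule f_inv_into_f)
  qed
  define col where "col a = (LEAST t. f (m (ix a)) t < f a t)" for a
  have colp: "col a < d \<and> f (m (ix a)) (col a) < f a (col a)" if a: "join_irr a" for a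
  proof -
    have "\<not> j (ix a) \<le> m (ix a)" using gn_not[OF g] ix[OF a] by blast
    then have "\<not> a \<le> m (ix a)" using ix[OF a] by simp
    then obtain t where t: "t < d" "f (m (ix a)) t < f a t" using f by (meson not_le)
    have "f (m (ix a)) (col a) < f a (col a)" unfolding col_def using t(2) by (rule LeastI)
    moreover have "col a \<le> t" unfolding col_def using t by (simp add: Least_le)
    ultimately show ?thesis using t by simp
  qed
  have proper: "col u \<noteq> col v"
    if u: "join_irr u" and v: "join_irr v" and e: "galois_complement_edge n j m u v" for u v
  proof
    assume same: "col u = col v"
    have ne: "ix u \<noteq> ix v" using e ix[OF u] ix[OF v] unfolding galois_complement_edge_def by metis
    have ge1: "\<not> galois_edge n j m u v" and ge2: "\<not> galois_edge n j m v u"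
      using e unfolding galois_complement_edge_def by simp_all
    have "u \<le> m (ix v)"
    proof (rule ccontr)
      assume "\<not> u \<le> m (ix v)"
      then have "galois_edge n j m u v" unfolding galois_edge_def
        using ix[OF u] ix[OF v] ne by blast
      then show False using ge1 by simp
    qed
    moreover have "v \<le> m (ix u)"
    proof (rule ccontr)
      assume "\<not> v \<le> m (ix u)"
      moreover have "ix v \<noteq> ix u" using ne by simp
      ultimately have "galois_edge n j m v u" unfolding galois_edge_def
        using ix[OF u] ix[OF v] by blast
      then show False using ge2 by simp
    qed
    ultimately have "f u (col u) \<le> f (m (ix v)) (col u)" "f v (col u) \<le> f (m (ix u)) (col u)"
      using f colp[OF u] by blast+
    moreover have "f (m (ix v)) (col u) < f v (col u)" using colp[OF v] same by simp
    ultimately show False using colp[OF u] by linarith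
  qed
  show ?thesis
    apply (rule exI[of _ col]) using colp proper by auto
qed

lemma col_to_dim:
  fixes j m :: "nat \<Rightarrow> 'a::{finite,bounded_lattice}"
  assumes sd: "semidistributive TYPE('a)" and g: "galois_numbering n x j m"
    and cb: "\<forall>v\<in>{a. join_irr a}. col v < (c::nat)"
    and cp: "\<forall>u\<in>{a. join_irr a}. \<forall>v\<in>{a. join_irr a}. galois_complement_edge n j m u v \<longrightarrow> col u \<noteq> col v"
  shows "\<exists>f :: 'a \<Rightarrow> nat \<Rightarrow> real. \<forall>u v. u \<le> v \<longleftrightarrow> (\<forall>t<c. f u t \<le> f v t)"
proof -
  have bj: "bij_betw j {1..n} {a. join_irr a}"
    using gn_D[OF g] by blast+
  have jirr: "join_irr (j i)" if "i \<in> {1..n}" for i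
    using bj that by (auto simp: bij_betw_def)
  define S where "S t z = {k \<in> {1..n}. col (j k) = t \<and> j k \<le> z}" for t z
  define g where "g z t = real (Max (insert 0 (S t z)))" for z t
  have finS: "finite (S t z)" for t z unfolding S_def by simp
  have mono: "g u t \<le> g v t" if "u \<le> v" for u v t
  proof -
    have "S t u \<subseteq> S t v" unfolding S_def using that by auto
    then have "Max (insert 0 (S t u)) \<le> Max (insert 0 (S t v))"
      by (intro Max_mono) (auto simp: finS)
    then show ?thesis unfolding g_def by simp
  qed
  have strict: "g (m i) (col (j i)) < g (j i) (col (j i))" if i: "i \<in> {1..n}" for i
  proof -
    let ?t = "col (j i)"
    have "i \<in> S ?t (j i)" unfolding S_def using i by simp
    then have ge: "i \<le> Max (insert 0 (S ?t (j i)))" by (simp add: finS)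
    have "\<forall>k\<in>S ?t (m i). k < i"
    proof
      fix k assume k: "k \<in> S ?t (m i)"
      then have k1: "k \<in> {1..n}" "col (j k) = ?t" "j k \<le> m i" unfolding S_def by auto
      show "k < i"
      proof (rule ccontr)
        assume "\<not> k < i"
        moreover have "k \<noteq> i" using k1 gn_not[OF g] by blast
        ultimately have "i < k" by simp
        then have "j i \<le> m k" using gn_lt[OF g i k1(1)] by simp
        then have "galois_complement_edge n j m (j i) (j k)"
          using compl_edge_jj[OF g i k1(1)] \<open>i < k\<close> k1 by simp
        then have "col (j i) \<noteq> col (j k)" using cp jirr[OF i] jirr[OF k1(1)] by blast
        then show False using k1(2) by simp
      qed
    qed
    moreover have "0 < i" using i by simp
    ultimately have "Max (insert 0 (S ?t (m i))) < i" by (simp add: finS)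
    with ge show ?thesis unfolding g_def by simp
  qed
  have "\<forall>u v. u \<le> v \<longleftrightarrow> (\<forall>t<c. g u t \<le> g v t)"
  proof (intro allI, rule iffI)
    fix u v :: 'a
    assume "u \<le> v" then show "\<forall>t<c. g u t \<le> g v t" using mono by blast
  next
    fix u v :: 'a
    assume h: "\<forall>t<c. g u t \<le> g v t"
    show "u \<le> v"
    proof (rule ccontr)
      assume "\<not> u \<le> v"
      then obtain i where i: "i \<in> {1..n}" "j i \<le> u" "v \<le> m i"
        using gn_separate[OF sd g] by blast
      let ?t = "col (j i)"
      have "?t < c" using cb jirr[OF i(1)] by auto
      moreover have "g v ?t < g u ?t"
        using mono[OF i(3), of ?t] strict[OF i(1)] mono[OF i(2), of ?t] by linarith
      ultimately show False using h by force
    qed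
  qed
  then show ?thesis by blast
qed

theorem theorem3p51:
  fixes x j m :: "nat \<Rightarrow> 'a::{finite,bounded_lattice}"
  assumes "semidistributive TYPE('a)"
    and "extremal TYPE('a)"
    and "card (UNIV :: 'a set) > 1"
    and "n = lattice_length TYPE('a)"
    and "galois_numbering n x j m"
  shows "order_dim TYPE('a) =
         chromatic_number {a::'a. join_irr a} (galois_complement_edge n j m)"
proof -
  have "(\<lambda>d. \<exists>f :: 'a \<Rightarrow> nat \<Rightarrow> real. \<forall>x y. x \<le> y \<longleftrightarrow> (\<forall>i<d. f x i \<le> f y i)) =
        (\<lambda>c. \<exists>col :: 'a \<Rightarrow> nat. (\<forall>v\<in>{a::'a. join_irr a}. col v < c) \<and>
           (\<forall>u\<in>{a::'a. join_irr a}. \<forall>v\<in>{a::'a. join_irr a}.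
              galois_complement_edge n j m u v \<longrightarrow> col u \<noteq> col v))"
  proof (rule ext, rule iffI)
    fix d assume "\<exists>f :: 'a \<Rightarrow> nat \<Rightarrow> real. \<forall>x y. x \<le> y \<longleftrightarrow> (\<forall>i<d. f x i \<le> f y i)"
    then obtain f :: "'a \<Rightarrow> nat \<Rightarrow> real" where ff: "\<forall>x y. x \<le> y \<longleftrightarrow> (\<forall>i<d. f x i \<le> f y i)" by blast
    show "\<exists>col :: 'a \<Rightarrow> nat. (\<forall>v\<in>{a::'a. join_irr a}. col v < d) \<and>
           (\<forall>u\<in>{a::'a. join_irr a}. \<forall>v\<in>{a::'a. join_irr a}.
              galois_complement_edge n j m u v \<longrightarrow> col u \<noteq> col v)"
      by (rule dim_to_col[OF assms(5) ff])
  next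
    fix c assume "\<exists>col :: 'a \<Rightarrow> nat. (\<forall>v\<in>{a::'a. join_irr a}. col v < c) \<and>
           (\<forall>u\<in>{a::'a. join_irr a}. \<forall>v\<in>{a::'a. join_irr a}.
              galois_complement_edge n j m u v \<longrightarrow> col u \<noteq> col v)"
    then obtain col :: "'a \<Rightarrow> nat" where cc: "(\<forall>v\<in>{a::'a. join_irr a}. col v < c)"
      "(\<forall>u\<in>{a::'a. join_irr a}. \<forall>v\<in>{a::'a. join_irr a}.
              galois_complement_edge n j m u v \<longrightarrow> col u \<noteq> col v)" by blast
    show "\<exists>f :: 'a \<Rightarrow> nat \<Rightarrow> real. \<forall>x y. x \<le> y \<longleftrightarrow> (\<forall>i<c. f x i \<le> f y i)"
      by (rule col_to_dim[OF assms(1) assms(5) cc])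
  qed
  then show ?thesis unfolding order_dim_def chromatic_number_def by (rule arg_cong[where f=Least])
qed

end
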